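(* Let $R=k[x_1,x_2,x_3]$ and let $I$ be a homogeneous $\mathfrak m$-primary ideal of $R$. If some minimal generator of $I$ of degree $n$ equals $\ell s$ for a linear form $\ell$ and a socle generator $s$ for $I$, then $\beta_{2,n+1}(R/I)\ge2$.
   Context: $k$ is a field, $R$ has the standard grading, $\mathfrak m=(x_1,x_2,x_3)$, and $\beta_{i,j}(R/I)=\dim_k\operatorname{Tor}_i^R(R/I,k)_j$. The socle of $R/I$ is $(I:\mathfrak m)/I$; homogeneous elements $s_1,\dots,s_r\in R$ are socle generators for $I$ if their images minimally generate the socle of $R/I$. *)

theory Defs
  imports Main "HOL.Vector_Spaces" "HOL-Library.Poly_Mapping" "HOL-Library.Product_Plus" "HOL-Library.Function_Algebras"
begin

text \<open>The polynomial ring R = k[x_1,x_2,x_3]: finitely supported maps from exponent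
  vectors (a,b,c) (standing for x_1^a x_2^b x_3^c) to coefficients in k.
  The variables x_1,x_2,x_3 are indexed 0,1,2.\<close>

type_synonym 'k poly3 = "(nat \<times> nat \<times> nat) \<Rightarrow>\<^sub>0 'k"

definition var3 :: "nat \<Rightarrow> 'k::comm_ring_1 poly3" where
  "var3 i = Poly_Mapping.single (if i = 0 then (1,0,0) else if i = 1 then (0,1,0) else (0,0,1)) 1"

definition const3 :: "'k::comm_ring_1 \<Rightarrow> 'k poly3" where
  "const3 c = Poly_Mapping.single (0,0,0) c"

definition tdeg :: "nat \<times> nat \<times> nat \<Rightarrow> nat" where
  "tdeg m = fst m + fst (snd m) + snd (snd m)"

text \<open>Homogeneous of (integer) degree d in the standard grading (0 is homogeneous of every degree).\<close>
definition homog :: "int \<Rightarrow> 'k::comm_ring_1 poly3 \<Rightarrow> bool" where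
  "homog d p \<longleftrightarrow> (\<forall>m \<in> Poly_Mapping.keys p. int (tdeg m) = d)"

definition is_homog :: "'k::comm_ring_1 poly3 \<Rightarrow> bool" where
  "is_homog p \<longleftrightarrow> (\<exists>d. homog d p)"

definition is_ideal :: "'a::comm_ring_1 set \<Rightarrow> bool" where
  "is_ideal I \<longleftrightarrow> 0 \<in> I \<and> (\<forall>a\<in>I. \<forall>b\<in>I. a + b \<in> I) \<and> (\<forall>r. \<forall>a\<in>I. r * a \<in> I)"

definition ideal_gen :: "'a::comm_ring_1 set \<Rightarrow> 'a set" where
  "ideal_gen G = \<Inter>{J. is_ideal J \<and> G \<subseteq> J}"

definition homog_ideal :: "'k::comm_ring_1 poly3 set \<Rightarrow> bool" where
  "homog_ideal I \<longleftrightarrow> is_ideal I \<and> (\<exists>G. (\<forall>g\<in>G. is_homog g) \<and> I = ideal_gen G)"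

definition max_ideal3 :: "'k::comm_ring_1 poly3 set" where
  "max_ideal3 = ideal_gen {var3 0, var3 1, var3 2}"

definition radical :: "'a::comm_ring_1 set \<Rightarrow> 'a set" where
  "radical I = {a. \<exists>n. a ^ n \<in> I}"

definition primary_ideal :: "'a::comm_ring_1 set \<Rightarrow> bool" where
  "primary_ideal I \<longleftrightarrow> is_ideal I \<and> I \<noteq> UNIV \<and>
     (\<forall>a b. a * b \<in> I \<longrightarrow> a \<in> I \<or> b \<in> radical I)"

definition m_primary :: "'k::comm_ring_1 poly3 set \<Rightarrow> bool" where
  "m_primary I \<longleftrightarrow> primary_ideal I \<and> radical I = max_ideal3"

definition minimal_generator :: "'k::comm_ring_1 poly3 set \<Rightarrow> 'k poly3 \<Rightarrow> bool" where
  "minimal_generator I f \<longleftrightarrow> (\<exists>G. finite G \<and> (\<forall>g\<in>G. is_homog g) \<and> I = ideal_gen G \<and>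
      (\<forall>g\<in>G. g \<notin> ideal_gen (G - {g})) \<and> f \<in> G)"

definition colon_m :: "'k::comm_ring_1 poly3 set \<Rightarrow> 'k poly3 set" where
  "colon_m I = {a. \<forall>x\<in>max_ideal3. x * a \<in> I}"

text \<open>s is a socle generator for I: s belongs to a set S of homogeneous elements whose
  images minimally generate the socle (I:m)/I of R/I, i.e. I + (S) = (I:m) and no
  element of S is redundant modulo I.\<close>
definition socle_generator :: "'k::comm_ring_1 poly3 set \<Rightarrow> 'k poly3 \<Rightarrow> bool" where
  "socle_generator I s \<longleftrightarrow> (\<exists>S. finite S \<and> (\<forall>t\<in>S. is_homog t) \<and> S \<subseteq> colon_m I \<and>
      ideal_gen (I \<union> S) = colon_m I \<and> (\<forall>t\<in>S. t \<notin> ideal_gen (I \<union> (S - {t}))) \<and> s \<in> S)"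

text \<open>Tor_i^R(R/I,k) is computed as the homology of (R/I) \<otimes> K, where K is the Koszul
  complex on x_1,x_2,x_3, a graded free resolution of k.  A chain of K_i \<otimes> R is a function
  from i-element subsets T of {0,1,2} (basis e_T of degree |T|) to R; its degree-j part
  has coefficients homogeneous of degree j - |T|.\<close>

definition kchains :: "nat \<Rightarrow> int \<Rightarrow> (nat set \<Rightarrow> 'k::comm_ring_1 poly3) set" where
  "kchains i j = {a. (\<forall>T. a T \<noteq> 0 \<longrightarrow> T \<subseteq> {0,1,2} \<and> card T = i) \<and>
                     (\<forall>T. homog (j - int i) (a T))}"

definition kdiff :: "nat \<Rightarrow> (nat set \<Rightarrow> 'k::comm_ring_1 poly3) \<Rightarrow> (nat set \<Rightarrow> 'k poly3)" where
  "kdiff i a = (\<lambda>T. if T \<subseteq> {0,1,2} \<and> card T = i then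
      (\<Sum>u\<in>{0,1,2} - T. (-1) ^ card {t\<in>T. t < u} * var3 u * a (insert u T)) else 0)"

text \<open>Cycles of (R/I) \<otimes> K in homological degree i and internal degree j, lifted to R.\<close>
definition kcycles :: "'k::comm_ring_1 poly3 set \<Rightarrow> nat \<Rightarrow> int \<Rightarrow> (nat set \<Rightarrow> 'k poly3) set" where
  "kcycles I i j = {a \<in> kchains i j. i = 0 \<or> (\<forall>T. kdiff (i - 1) a T \<in> I)}"

text \<open>Boundaries of (R/I) \<otimes> K, lifted to R (together with everything congruent to 0 mod I).\<close>
definition kbounds :: "'k::comm_ring_1 poly3 set \<Rightarrow> nat \<Rightarrow> int \<Rightarrow> (nat set \<Rightarrow> 'k poly3) set" where
  "kbounds I i j = {a \<in> kchains i j. \<exists>b \<in> kchains (i + 1) j. \<forall>T. a T - kdiff i b T \<in> I}"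

definition cscale :: "'k::field \<Rightarrow> (nat set \<Rightarrow> 'k poly3) \<Rightarrow> (nat set \<Rightarrow> 'k poly3)" where
  "cscale c a = (\<lambda>T. const3 c * a T)"

text \<open>beta_{i,j}(R/I) = dim_k Tor_i^R(R/I,k)_j = dim (cycles / boundaries).\<close>
definition betti :: "'k::field poly3 set \<Rightarrow> nat \<Rightarrow> int \<Rightarrow> nat" where
  "betti I i j = vector_space.dim cscale (kcycles I i j) - vector_space.dim cscale (kbounds I i j)"

end

theory Submission
  imports Defs
begin


definition hpart :: "nat \<Rightarrow> 'k::comm_ring_1 poly3 \<Rightarrow> 'k poly3" where
  "hpart d p = Poly_Mapping.mapp (\<lambda>m c. if tdeg m = d then c else 0) p"

lemma lookup_hpart: "Poly_Mapping.lookup (hpart d p) m = (if tdeg m = d then Poly_Mapping.lookup p m else 0)"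
  by (simp add: hpart_def lookup_mapp when_def in_keys_iff)

lemma tdeg_add: "tdeg (a + b) = tdeg a + tdeg b"
  by (cases a; cases b) (auto simp: tdeg_def)

lemma hpart_mult_homog:
  fixes r g :: "'k::comm_ring_1 poly3"
  assumes "homog (int e) g"
  shows "hpart d (r * g) = (if e \<le> d then hpart (d - e) r * g else 0)"
proof (rule poly_mapping_eqI)
  fix k
  have inner: "tdeg k = tdeg l + e" if nz: "(\<Sum>q. Poly_Mapping.lookup g q when k = l + q) \<noteq> 0" for l
  proof -
    obtain q where "(Poly_Mapping.lookup g q when k = l + q) \<noteq> 0"
      using nz by (rule Sum_any.not_neutral_obtains_not_neutral)
    then have "k = l + q" "q \<in> Poly_Mapping.keys g" by (auto simp: in_keys_iff when_def split: if_splits)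
    then show ?thesis using assms by (auto simp: homog_def tdeg_add)
  qed
  show "Poly_Mapping.lookup (hpart d (r * g)) k = Poly_Mapping.lookup (if e \<le> d then hpart (d - e) r * g else 0) k"
  proof (cases "e \<le> d")
    case True
    have "Poly_Mapping.lookup (hpart d (r * g)) k = (\<Sum>l. Poly_Mapping.lookup (hpart (d - e) r) l * (\<Sum>q. Poly_Mapping.lookup g q when k = l + q))"
    proof (cases "tdeg k = d")
      case True
      have "(\<Sum>l. Poly_Mapping.lookup r l * (\<Sum>q. Poly_Mapping.lookup g q when k = l + q)) = (\<Sum>l. Poly_Mapping.lookup (hpart (d - e) r) l * (\<Sum>q. Poly_Mapping.lookup g q when k = l + q))"
        unfolding lookup_hpart using True \<open>e \<le> d\<close>
      proof (intro Sum_any.cong)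
        fix l
        show "Poly_Mapping.lookup r l * (\<Sum>q. Poly_Mapping.lookup g q when k = l + q) =
          (if tdeg l = d - e then Poly_Mapping.lookup r l else 0) * (\<Sum>q. Poly_Mapping.lookup g q when k = l + q)"
          using inner[of l] True by (cases "(\<Sum>q. Poly_Mapping.lookup g q when k = l + q) = 0") auto
      qed
      then show ?thesis using True by (simp add: lookup_hpart lookup_mult)
    next
      case False
      have "(\<Sum>l. Poly_Mapping.lookup (hpart (d - e) r) l * (\<Sum>q. Poly_Mapping.lookup g q when k = l + q)) = (\<Sum>l::nat\<times>nat\<times>nat. 0)"
        unfolding lookup_hpart
      proof (rule Sum_any.cong[where h = "\<lambda>l. 0"])
        fix l
        show "(if tdeg l = d - e then Poly_Mapping.lookup r l else 0) * (\<Sum>q. Poly_Mapping.lookup g q when k = l + q) = 0"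
          using inner[of l] False \<open>e \<le> d\<close> by (cases "(\<Sum>q. Poly_Mapping.lookup g q when k = l + q) = 0") auto
      qed
      then show ?thesis using False by (simp add: lookup_hpart)
    qed
    then show ?thesis using True by (simp add: lookup_mult)
  next
    case False
    have "(\<Sum>l. Poly_Mapping.lookup r l * (\<Sum>q. Poly_Mapping.lookup g q when k = l + q)) = (\<Sum>l::nat\<times>nat\<times>nat. 0)" if "tdeg k = d"
    proof (rule Sum_any.cong[where h = "\<lambda>l. 0"])
      fix l
      show "Poly_Mapping.lookup r l * (\<Sum>q. Poly_Mapping.lookup g q when k = l + q) = 0"
        using inner[of l] False that by (cases "(\<Sum>q. Poly_Mapping.lookup g q when k = l + q) = 0") auto
    qed
    then show ?thesis using False by (auto simp: lookup_hpart lookup_mult)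
  qed
qed

lemma hpart_add: "hpart d (p + q) = hpart d p + hpart d q"
  by (rule poly_mapping_eqI) (simp add: lookup_hpart lookup_add)
lemma hpart_minus: "hpart d (p - q) = hpart d p - hpart d q"
  by (rule poly_mapping_eqI) (simp add: lookup_hpart lookup_minus)
lemma hpart_uminus: "hpart d (- p) = - hpart d p"
  by (rule poly_mapping_eqI) (simp add: lookup_hpart)
lemma hpart_zero[simp]: "hpart d 0 = 0"
  by (rule poly_mapping_eqI) (simp add: lookup_hpart)
lemma hpart_homog: "homog (int d) p \<Longrightarrow> hpart d p = p"
  by (rule poly_mapping_eqI) (auto simp: lookup_hpart homog_def in_keys_iff)

lemma homog_const3: "homog 0 (const3 c)"
  by (simp add: homog_def const3_def tdeg_def)
lemma homog_var3: "homog 1 (var3 u)"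
  by (simp add: homog_def var3_def tdeg_def)

lemma hpart_const3: "hpart d (const3 c * p) = const3 c * hpart d p"
  using hpart_mult_homog[of 0 "const3 c" d p] homog_const3[of c] by (simp add: mult.commute)



lemma ideal_gen_ideal: "is_ideal (ideal_gen G)"
  unfolding ideal_gen_def is_ideal_def by auto
lemma ideal_gen_sup: "G \<subseteq> ideal_gen G"
  unfolding ideal_gen_def by auto
lemma ideal_gen_least: "is_ideal J \<Longrightarrow> G \<subseteq> J \<Longrightarrow> ideal_gen G \<subseteq> J"
  unfolding ideal_gen_def by auto
lemma ideal_0: "is_ideal I \<Longrightarrow> 0 \<in> I"
  unfolding is_ideal_def by auto
lemma ideal_add: "is_ideal I \<Longrightarrow> a \<in> I \<Longrightarrow> b \<in> I \<Longrightarrow> a + b \<in> I"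
  unfolding is_ideal_def by auto
lemma ideal_mult: "is_ideal I \<Longrightarrow> a \<in> I \<Longrightarrow> r * a \<in> I"
  unfolding is_ideal_def by auto
lemma ideal_mult_right: "is_ideal I \<Longrightarrow> a \<in> I \<Longrightarrow> a * r \<in> I"
  unfolding is_ideal_def by (metis mult.commute)
lemma ideal_uminus: "is_ideal I \<Longrightarrow> a \<in> I \<Longrightarrow> - a \<in> I"
  using ideal_mult[of I a "-1"] by simp
lemma ideal_diff: "is_ideal I \<Longrightarrow> a \<in> I \<Longrightarrow> b \<in> I \<Longrightarrow> a - b \<in> I"
  using ideal_add[of I a "- b"] ideal_uminus[of I b] by simp
lemma ideal_sum: "is_ideal I \<Longrightarrow> (\<And>x. x \<in> A \<Longrightarrow> f x \<in> I) \<Longrightarrow> sum f A \<in> I"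
  by (induction A rule: infinite_finite_induct) (auto intro: ideal_0 ideal_add)

lemma const3_mult: "const3 (a * b) = const3 a * const3 b"
  by (simp add: const3_def mult_single)
lemma const3_add: "const3 (a + b) = const3 a + const3 b"
  by (simp add: const3_def single_add)
lemma const3_diff: "const3 (a - b) = const3 a - const3 b"
  by (simp add: const3_def single_diff)
lemma const3_1[simp]: "const3 1 = 1"
  unfolding const3_def by (metis single_one zero_prod_def)
lemma const3_0[simp]: "const3 0 = 0"
  by (simp add: const3_def)

lemma homog_deg_unique: "p \<noteq> 0 \<Longrightarrow> homog d p \<Longrightarrow> homog d' p \<Longrightarrow> d = d'"
  unfolding homog_def by (metis all_not_in_conv keys_eq_empty)
lemma homog_deg_nonneg: "p \<noteq> 0 \<Longrightarrow> homog d p \<Longrightarrow> d \<ge> 0"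
  unfolding homog_def by (metis all_not_in_conv keys_eq_empty of_nat_0_le_iff)
lemma homog_mult: "homog a p \<Longrightarrow> homog b q \<Longrightarrow> homog (a + b) (p * q)"
  unfolding homog_def
proof (intro ballI)
  fix m assume H: "\<forall>m\<in>Poly_Mapping.keys p. int (tdeg m) = a" "\<forall>m\<in>Poly_Mapping.keys q. int (tdeg m) = b"
    "m \<in> Poly_Mapping.keys (p * q)"
  from this(3) obtain a' b' where "m = a' + b'" "a' \<in> Poly_Mapping.keys p" "b' \<in> Poly_Mapping.keys q"
    using keys_mult[of p q] by blast
  then show "int (tdeg m) = a + b" using H by (simp add: tdeg_add)
qed

lemma graded_key:
  fixes G :: "'k::field poly3 set"
  assumes hom: "\<forall>g\<in>G. is_homog g" and fG: "f \<in> G" and hf: "homog (int n) f" and f0: "f \<noteq> 0"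
    and i: "i \<in> ideal_gen G"
  shows "hpart n (var3 u * i) \<in> ideal_gen (G - {f})"
proof -
  let ?J = "ideal_gen (G - {f})"
  let ?S = "{i. \<forall>r. hpart n (var3 u * r * i) \<in> ?J}"
  have J: "is_ideal ?J" by (rule ideal_gen_ideal)
  have "is_ideal ?S"
    unfolding is_ideal_def
  proof (intro conjI ballI allI)
    show "0 \<in> ?S" using ideal_0[OF J] by simp
  next
    fix a b assume "a \<in> ?S" "b \<in> ?S"
    then show "a + b \<in> ?S" using ideal_add[OF J] by (simp add: distrib_left hpart_add)
  next
    fix r a assume "a \<in> ?S"
    then have h: "\<And>r'. hpart n (var3 u * r' * a) \<in> ?J" by simp
    show "r * a \<in> ?S"
    proof (intro CollectI allI)
      fix r'
      have eq: "var3 u * r' * (r * a) = var3 u * (r' * r) * a" by (simp add: mult.assoc)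
      show "hpart n (var3 u * r' * (r * a)) \<in> ?J" unfolding eq by (rule h)
    qed
  qed
  moreover have "G \<subseteq> ?S"
  proof
    fix g assume g: "g \<in> G"
    show "g \<in> ?S"
    proof (cases "g = 0")
      case True then show ?thesis using ideal_0[OF J] by simp
    next
      case False
      obtain e where e: "homog e g" using hom g unfolding is_homog_def by blast
      have "e \<ge> 0" using homog_deg_nonneg[OF False e] .
      define e' where "e' = nat e"
      have e': "e = int e'" using \<open>e \<ge> 0\<close> by (simp add: e'_def)
      show ?thesis
      proof (intro CollectI allI)
        fix r
        have eq: "hpart n (var3 u * r * g) = (if e' \<le> n then hpart (n - e') (var3 u * r) * g else 0)"
          by (rule hpart_mult_homog) (use e e' in simp)
        show "hpart n (var3 u * r * g) \<in> ?J"
        proof (cases "g = f")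
          case True
          then have "int e' = int n" using homog_deg_unique[OF f0 hf, of e] e e' by simp
          then have "e' = n" by simp
          have "hpart 0 (r * var3 u) = (if 1 \<le> (0::nat) then hpart (0 - 1) r * var3 u else 0)"
            by (rule hpart_mult_homog) (simp add: homog_var3)
          then have h0: "hpart 0 (var3 u * r) = 0" by (simp add: mult.commute[of r])
          have "hpart n (var3 u * r * g) = 0" using eq \<open>e' = n\<close> h0 by simp
          then show ?thesis using ideal_0[OF J] by simp
        next
          case False
          then have "g \<in> G - {f}" using g by blast
          then have "g \<in> ?J" using ideal_gen_sup[of "G - {f}"] by blast
          then have "hpart (n - e') (var3 u * r) * g \<in> ?J" by (rule ideal_mult[OF J])
          then show ?thesis using eq ideal_0[OF J] by (cases "e' \<le> n") simp_all
        qed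
      qed
    qed
  qed
  ultimately have "ideal_gen G \<subseteq> ?S" by (rule ideal_gen_least)
  then have "i \<in> ?S" using i by blast
  then have "hpart n (var3 u * 1 * i) \<in> ?J" by blast
  then show ?thesis by simp
qed

lemma const3_var3: "const3 c * var3 0 = Poly_Mapping.single (1,0,0) c"
  "const3 c * var3 (Suc 0) = Poly_Mapping.single (0,1,0) c"
  "const3 c * var3 2 = Poly_Mapping.single (0,0,1) c"
  by (simp_all add: const3_def var3_def mult_single)

lemma lin_form:
  fixes l :: "'k::comm_ring_1 poly3"
  assumes "homog 1 l"
  shows "l = const3 (Poly_Mapping.lookup l (1,0,0)) * var3 0 + const3 (Poly_Mapping.lookup l (0,1,0)) * var3 1
          + const3 (Poly_Mapping.lookup l (0,0,1)) * var3 2"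
proof (rule poly_mapping_eqI)
  fix k :: "nat \<times> nat \<times> nat"
  have z: "Poly_Mapping.lookup l k = 0" if "tdeg k \<noteq> 1"
    using assms that by (auto simp: homog_def in_keys_iff)
  have "k = (1,0,0) \<or> k = (0,1,0) \<or> k = (0,0,1) \<or> tdeg k \<noteq> 1"
    by (cases k) (auto simp: tdeg_def)
  then show "Poly_Mapping.lookup l k = Poly_Mapping.lookup (const3 (Poly_Mapping.lookup l (1,0,0)) * var3 0 + const3 (Poly_Mapping.lookup l (0,1,0)) * var3 1
          + const3 (Poly_Mapping.lookup l (0,0,1)) * var3 2) k"
  proof (elim disjE)
    assume "tdeg k \<noteq> 1"
    moreover have "k \<noteq> (1,0,0)" "k \<noteq> (0,1,0)" "k \<noteq> (0,0,1)" using calculation by (auto simp: tdeg_def)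
    ultimately show ?thesis using z by (simp add: const3_var3 lookup_add lookup_single)
  qed (simp_all add: const3_var3 lookup_add lookup_single)
qed



lemma core:
  fixes I J :: "'k::field poly3 set" and s l \<beta> \<beta>' :: "'k poly3" and \<gamma> \<gamma>' :: "nat \<Rightarrow> 'k"
  assumes J: "is_ideal J"
    and key: "\<And>u i. i \<in> I \<Longrightarrow> hpart n (var3 u * i) \<in> J"
    and fnot: "hpart n (l * s) \<notin> J"
    and l: "homog 1 l"
    and hb: "\<And>w. const3 (\<gamma> w) * s - var3 w * \<beta> \<in> I"
    and hb': "\<And>w. const3 (\<gamma>' w) * s - var3 w * \<beta>' \<in> I"
    and D: "\<gamma>' u * \<gamma> w - \<gamma> u * \<gamma>' w \<noteq> 0"
  shows False
proof -
  define M where "M p \<longleftrightarrow> hpart n p \<in> J" for p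
  have Madd: "M (p + q)" if "M p" "M q" for p q
    using that ideal_add[OF J] by (simp add: M_def hpart_add)
  have Mdiff: "M (p - q)" if "M p" "M q" for p q
    using that ideal_diff[OF J] by (simp add: M_def hpart_minus)
  have Mc: "M (const3 c * p)" if "M p" for p c
    using that ideal_mult[OF J] by (simp add: M_def hpart_const3)
  have Mcinv: "M p" if "M (const3 c * p)" "c \<noteq> 0" for p c
  proof -
    have "M (const3 (inverse c) * (const3 c * p))" using Mc that(1) by blast
    also have "const3 (inverse c) * (const3 c * p) = p"
      using that(2) by (simp add: mult.assoc[symmetric] const3_mult[symmetric])
    finally show ?thesis .
  qed
  define \<sigma> where "\<sigma> t = var3 t * s" for t
  have R: "M (const3 (g b) * \<sigma> a - const3 (g a) * \<sigma> b)"
    if hg: "\<And>w. const3 (g w) * s - var3 w * bb \<in> I" for g bb a b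
  proof -
    have "const3 (g b) * \<sigma> a - const3 (g a) * \<sigma> b
        = var3 a * (const3 (g b) * s - var3 b * bb) - var3 b * (const3 (g a) * s - var3 a * bb)"
      by (simp add: \<sigma>_def algebra_simps)
    moreover have "M (var3 a * (const3 (g b) * s - var3 b * bb))" using key hg by (simp add: M_def)
    moreover have "M (var3 b * (const3 (g a) * s - var3 a * bb))" using key hg by (simp add: M_def)
    ultimately show ?thesis using Mdiff by simp
  qed
  have "const3 (\<gamma>' u) * (const3 (\<gamma> w) * \<sigma> u - const3 (\<gamma> u) * \<sigma> w)
      - const3 (\<gamma> u) * (const3 (\<gamma>' w) * \<sigma> u - const3 (\<gamma>' u) * \<sigma> w)
      = const3 (\<gamma>' u * \<gamma> w - \<gamma> u * \<gamma>' w) * \<sigma> u"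
    by (simp add: const3_mult const3_diff algebra_simps)
  moreover have "M (const3 (\<gamma>' u) * (const3 (\<gamma> w) * \<sigma> u - const3 (\<gamma> u) * \<sigma> w)
      - const3 (\<gamma> u) * (const3 (\<gamma>' w) * \<sigma> u - const3 (\<gamma>' u) * \<sigma> w))"
    by (rule Mdiff[OF Mc[OF R[OF hb]] Mc[OF R[OF hb']]])
  ultimately have Mu: "M (\<sigma> u)" using Mcinv D by metis
  have "const3 (\<gamma>' w) * (const3 (\<gamma> w) * \<sigma> u - const3 (\<gamma> u) * \<sigma> w)
      - const3 (\<gamma> w) * (const3 (\<gamma>' w) * \<sigma> u - const3 (\<gamma>' u) * \<sigma> w)
      = const3 (\<gamma>' u * \<gamma> w - \<gamma> u * \<gamma>' w) * \<sigma> w"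
    by (simp add: const3_mult const3_diff algebra_simps)
  moreover have "M (const3 (\<gamma>' w) * (const3 (\<gamma> w) * \<sigma> u - const3 (\<gamma> u) * \<sigma> w)
      - const3 (\<gamma> w) * (const3 (\<gamma>' w) * \<sigma> u - const3 (\<gamma>' u) * \<sigma> w))"
    by (rule Mdiff[OF Mc[OF R[OF hb]] Mc[OF R[OF hb']]])
  ultimately have Mw: "M (\<sigma> w)" using Mcinv D by metis
  have Mall: "M (\<sigma> t)" for t
  proof -
    have a1: "M (const3 (g w) * \<sigma> t)" if hg: "\<And>w. const3 (g w) * s - var3 w * bb \<in> I" for g bb
    proof -
      have "M (const3 (g w) * \<sigma> t - const3 (g t) * \<sigma> w)" by (rule R) (rule hg)
      moreover have "M (const3 (g t) * \<sigma> w)" using Mw Mc by blast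
      ultimately have "M (const3 (g w) * \<sigma> t - const3 (g t) * \<sigma> w + const3 (g t) * \<sigma> w)" by (rule Madd)
      then show ?thesis by simp
    qed
    have "\<gamma> w \<noteq> 0 \<or> \<gamma>' w \<noteq> 0" using D by auto
    then show ?thesis using a1[of \<gamma>, OF hb] a1[of \<gamma>', OF hb'] Mcinv by blast
  qed
  have "l * s = const3 (Poly_Mapping.lookup l (1,0,0)) * \<sigma> 0 + const3 (Poly_Mapping.lookup l (0,1,0)) * \<sigma> 1
          + const3 (Poly_Mapping.lookup l (0,0,1)) * \<sigma> 2"
    by (subst lin_form[OF l]) (simp add: \<sigma>_def algebra_simps)
  moreover have "M (const3 (Poly_Mapping.lookup l (1,0,0)) * \<sigma> 0 + const3 (Poly_Mapping.lookup l (0,1,0)) * \<sigma> 1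
          + const3 (Poly_Mapping.lookup l (0,0,1)) * \<sigma> 2)"
    by (intro Madd Mc Mall)
  ultimately show False using fnot by (simp add: M_def)
qed



lemma kdiff2_12: "kdiff 2 b {1,2} = var3 0 * b {0,1,2}"
  by (simp add: kdiff_def insert_Diff_if insert_commute)
lemma kdiff2_02: "kdiff 2 b {0,2} = - (var3 1 * b {0,1,2})"
proof -
  have "{t. t = 0 \<and> (t = 0 \<or> t = (2::nat))} = {0}" by auto
  then show ?thesis by (simp add: kdiff_def insert_Diff_if insert_commute)
qed
lemma kdiff2_01: "kdiff 2 b {0,1} = var3 2 * b {0,1,2}"
proof -
  have "{t. (t = 0 \<or> t = Suc 0) \<and> t < (2::nat)} = {0, 1}" by auto
  then show ?thesis by (simp add: kdiff_def insert_Diff_if insert_commute)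
qed

lemma kdiff1_0: "kdiff 1 a {0} = - (var3 1 * a {0,1}) - var3 2 * a {0,2}"
proof -
  have "{0,1,2} - {0::nat} = {1,2}" "{t. t = 0 \<and> t < (2::nat)} = {0}" by auto
  note eqs = this
  show ?thesis by (simp add: kdiff_def insert_commute eqs del: Collect_empty_eq)
qed
lemma kdiff1_1: "kdiff 1 a {1} = var3 0 * a {0,1} - var3 2 * a {1,2}"
proof -
  have "{0,Suc 0,2} - {Suc 0} = {0::nat,2}" "{t. t = Suc 0 \<and> t < (2::nat)} = {1}" by auto
  note eqs = this
  show ?thesis by (simp add: kdiff_def insert_commute eqs del: Collect_empty_eq)
qed
lemma kdiff1_2: "kdiff 1 a {2} = var3 0 * a {0,2} + var3 1 * a {1,2}"
proof -
  have "{0,Suc 0,2} - {2::nat} = {0,Suc 0}" "{t. t = (2::nat) \<and> t = 0} = {}" by auto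
  note eqs = this
  show ?thesis by (simp add: kdiff_def insert_commute eqs del: Collect_empty_eq)
qed



lemma sub3: assumes T: "T \<subseteq> {0,1,2::nat}" shows "T = {} \<or> T = {0} \<or> T = {1} \<or> T = {2} \<or> T = {0,1} \<or> T = {0,2} \<or> T = {1,2} \<or> T = {0,1,2}"
proof -
  have "T \<in> Pow {0,1,2}" using T by simp
  also have "Pow {0,1,2::nat} = {{}, {0}, {1}, {2}, {0,1}, {0,2}, {1,2}, {0,1,2}}"
    by (simp add: Pow_insert insert_commute)
  finally show ?thesis by simp
qed

lemma card1_3: assumes "T \<subseteq> {0,1,2::nat}" "card T = 1" shows "T = {0} \<or> T = {1} \<or> T = {2}"
  using sub3[OF assms(1)] assms(2) by (elim disjE) simp_all
lemma card2_3: assumes "T \<subseteq> {0,1,2::nat}" "card T = 2" shows "T = {1,2} \<or> T = {0,2} \<or> T = {0,1}"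
  using sub3[OF assms(1)] assms(2) by (elim disjE) simp_all

lemma kdiff_out: "\<not> (T \<subseteq> {0,1,2} \<and> card T = i) \<Longrightarrow> kdiff i a T = 0"
  unfolding kdiff_def by (simp only: if_False)

lemma kdiff_dd: "kdiff 1 (kdiff 2 b) T = 0"
proof (cases "T \<subseteq> {0,1,2} \<and> card T = 1")
  case True
  then have "T = {0} \<or> T = {1} \<or> T = {2}" using card1_3 by blast
  then show ?thesis
    by (elim disjE) (simp only: kdiff1_0 kdiff1_1 kdiff1_2 kdiff2_12 kdiff2_02 kdiff2_01, simp add: algebra_simps)+
next
  case False
  then show ?thesis by (rule kdiff_out)
qed

lemma kdiff_diff: "kdiff i (a - c) T = kdiff i a T - kdiff i c T"
  by (simp add: kdiff_def sum_subtractf algebra_simps)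
lemma kdiff_add: "kdiff i (a + c) T = kdiff i a T + kdiff i c T"
  by (simp add: kdiff_def sum.distrib algebra_simps)
lemma kdiff_scale: "kdiff i (cscale c a) T = const3 c * kdiff i a T"
  by (simp add: kdiff_def cscale_def sum_distrib_left algebra_simps)
lemma kdiff_zero: "kdiff i 0 T = 0"
  by (simp add: kdiff_def)

lemma kdiff_ideal:
  assumes "is_ideal I" "\<And>u T'. var3 u * e T' \<in> I"
  shows "kdiff i e T \<in> I"
  unfolding kdiff_def
  using assms by (auto intro!: ideal_sum ideal_0 simp: mult.assoc intro: ideal_mult)

lemma homog_add: "homog d p \<Longrightarrow> homog d q \<Longrightarrow> homog d (p + q)"
  unfolding homog_def using keys_add[of p q] by blast
lemma homog_zero: "homog d 0"
  by (simp add: homog_def)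
lemma homog_scale: "homog d p \<Longrightarrow> homog d (const3 c * p)"
  using homog_mult[OF homog_const3] by fastforce

lemma kchains_zero: "0 \<in> kchains i j"
  by (simp add: kchains_def homog_zero)
lemma kchains_add: "a \<in> kchains i j \<Longrightarrow> b \<in> kchains i j \<Longrightarrow> a + b \<in> kchains i j"
proof -
  assume a: "a \<in> kchains i j" and b: "b \<in> kchains i j"
  have "(a + b) T \<noteq> 0 \<longrightarrow> T \<subseteq> {0,1,2} \<and> card T = i" for T
  proof
    assume "(a + b) T \<noteq> 0"
    then have "a T \<noteq> 0 \<or> b T \<noteq> 0" by auto
    then show "T \<subseteq> {0,1,2} \<and> card T = i" using a b unfolding kchains_def by blast
  qed
  moreover have "homog (j - int i) ((a + b) T)" for T
    using a b unfolding kchains_def by (simp add: homog_add)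
  ultimately show ?thesis unfolding kchains_def by blast
qed
lemma kchains_scale: assumes a: "a \<in> kchains i j" shows "cscale c a \<in> kchains i j"
proof -
  have "T \<subseteq> {0,1,2} \<and> card T = i" if "const3 c * a T \<noteq> 0" for T
  proof -
    from that have "a T \<noteq> 0" by auto
    then show ?thesis using a unfolding kchains_def by blast
  qed
  moreover have "homog (j - int i) (const3 c * a T)" for T
    using a unfolding kchains_def by (simp add: homog_scale)
  ultimately show ?thesis unfolding kchains_def cscale_def by blast
qed

interpretation cs: vector_space "cscale :: 'k::field \<Rightarrow> (nat set \<Rightarrow> 'k poly3) \<Rightarrow> _"
  by unfold_locales (auto simp: cscale_def fun_eq_iff const3_add const3_mult algebra_simps)

lemma kbounds_subspace: assumes I: "is_ideal I" shows "cs.subspace (kbounds I i j)"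
proof (rule cs.subspaceI)
  show "0 \<in> kbounds I i j"
    unfolding kbounds_def using kchains_zero ideal_0[OF I] by (auto simp: kdiff_zero intro!: bexI[of _ 0])
next
  fix x y assume "x \<in> kbounds I i j" "y \<in> kbounds I i j"
  then obtain bx b2 where "x \<in> kchains i j" "bx \<in> kchains (i+1) j" "\<And>T. x T - kdiff i bx T \<in> I"
    "y \<in> kchains i j" "b2 \<in> kchains (i+1) j" "\<And>T. y T - kdiff i b2 T \<in> I"
    unfolding kbounds_def by blast
  note h = this
  have "(x + y) T - kdiff i (bx + b2) T \<in> I" for T
  proof -
    have "(x + y) T - kdiff i (bx + b2) T = (x T - kdiff i bx T) + (y T - kdiff i b2 T)"
      by (simp add: kdiff_add)
    then show ?thesis using ideal_add[OF I h(3) h(6)] by metis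
  qed
  then show "x + y \<in> kbounds I i j"
    unfolding kbounds_def using h kchains_add by blast
next
  fix c x assume "x \<in> kbounds I i j"
  then obtain bx where "x \<in> kchains i j" "bx \<in> kchains (i+1) j" "\<And>T. x T - kdiff i bx T \<in> I"
    unfolding kbounds_def by blast
  note h = this
  have "(cscale c x) T - kdiff i (cscale c bx) T \<in> I" for T
  proof -
    have "(cscale c x) T - kdiff i (cscale c bx) T = const3 c * (x T - kdiff i bx T)"
      unfolding kdiff_scale by (simp add: cscale_def right_diff_distrib)
    then show ?thesis using ideal_mult[OF I h(3)] by metis
  qed
  then show "cscale c x \<in> kbounds I i j"
    unfolding kbounds_def using h kchains_scale by blast
qed



lemma kb_sub_kc: assumes I: "is_ideal I" shows "kbounds I 2 j \<subseteq> kcycles I 2 j"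
proof
  fix a assume "a \<in> kbounds I 2 j"
  then obtain b where a: "a \<in> kchains 2 j" and h: "\<And>T. a T - kdiff 2 b T \<in> I"
    unfolding kbounds_def by blast
  have "kdiff 1 a T \<in> I" for T
  proof -
    have "kdiff 1 a T = kdiff 1 (a - kdiff 2 b) T + kdiff 1 (kdiff 2 b) T"
      by (simp add: kdiff_diff)
    also have "\<dots> = kdiff 1 (a - kdiff 2 b) T" unfolding kdiff_dd by simp
    also have "\<dots> \<in> I"
      by (rule kdiff_ideal[OF I]) (simp add: ideal_mult[OF I h])
    finally show ?thesis .
  qed
  then show "a \<in> kcycles I 2 j" unfolding kcycles_def using a by simp
qed

lemma sum_fun_apply: "(sum f A) x = sum (\<lambda>a. f a x) A"
  by (induction A rule: infinite_finite_induct) auto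

definition Ech :: "nat set \<Rightarrow> nat \<times> nat \<times> nat \<Rightarrow> nat set \<Rightarrow> 'k::comm_ring_1 poly3" where
  "Ech T0 m = (\<lambda>T. if T = T0 then Poly_Mapping.single m 1 else 0)"

definition Wset :: "nat \<Rightarrow> (nat set \<Rightarrow> 'k::comm_ring_1 poly3) set" where
  "Wset D = (\<lambda>p. Ech (fst p) (snd p)) ` (Pow {0,1,2} \<times> ({..D} \<times> {..D} \<times> {..D}))"

lemma finite_Wset: "finite (Wset D)"
  unfolding Wset_def by simp

lemma const3_single: "const3 c * Poly_Mapping.single m d = Poly_Mapping.single m (c * d)"
  by (cases m) (simp add: const3_def mult_single)

lemma kchains_span: "(kchains i j :: (nat set \<Rightarrow> 'k::field poly3) set) \<subseteq> cs.span (Wset (nat j))"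
proof
  fix a :: "nat set \<Rightarrow> 'k::field poly3" assume a: "a \<in> kchains i j"
  define A where "A = Pow {0,1,2::nat} \<times> ({..nat j} \<times> {..nat j} \<times> {..nat j})"
  have fA: "finite A" unfolding A_def by simp
  have eq: "a = (\<Sum>p\<in>A. cscale (Poly_Mapping.lookup (a (fst p)) (snd p)) (Ech (fst p) (snd p)))"
  proof (rule ext, rule poly_mapping_eqI)
    fix T k
    have "Poly_Mapping.lookup ((\<Sum>p\<in>A. cscale (Poly_Mapping.lookup (a (fst p)) (snd p)) (Ech (fst p) (snd p))) T) k
        = (\<Sum>p\<in>A. if p = (T, k) then Poly_Mapping.lookup (a T) k else 0)"
      unfolding sum_fun_apply lookup_sum
      by (intro sum.cong refl) (auto simp: cscale_def Ech_def const3_single lookup_single when_def)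
    also have "\<dots> = (if (T, k) \<in> A then Poly_Mapping.lookup (a T) k else 0)"
      by (simp add: fA)
    also have "\<dots> = Poly_Mapping.lookup (a T) k"
    proof (cases "(T, k) \<in> A")
      case False
      show ?thesis
      proof (cases "a T = 0")
        case False
        then have T: "T \<subseteq> {0,1,2}" using a unfolding kchains_def by blast
        have "k \<notin> Poly_Mapping.keys (a T)"
        proof
          assume k: "k \<in> Poly_Mapping.keys (a T)"
          have "homog (j - int i) (a T)" using a unfolding kchains_def by blast
          then have "int (tdeg k) = j - int i" using k unfolding homog_def by blast
          then have "tdeg k \<le> nat j" by linarith
          then have "k \<in> {..nat j} \<times> {..nat j} \<times> {..nat j}" by (cases k) (auto simp: tdeg_def)
          then show False using \<open>(T, k) \<notin> A\<close> T unfolding A_def by auto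
        qed
        then show ?thesis using \<open>(T, k) \<notin> A\<close> by (simp add: in_keys_iff)
      qed (use \<open>(T, k) \<notin> A\<close> in simp)
    qed simp
    finally show "Poly_Mapping.lookup (a T) k = Poly_Mapping.lookup ((\<Sum>p\<in>A. cscale (Poly_Mapping.lookup (a (fst p)) (snd p)) (Ech (fst p) (snd p))) T) k"
      by simp
  qed
  have "(\<Sum>p\<in>A. cscale (Poly_Mapping.lookup (a (fst p)) (snd p)) (Ech (fst p) (snd p))) \<in> cs.span (Wset (nat j))"
  proof (rule cs.span_sum)
    fix p assume "p \<in> A"
    then have "Ech (fst p) (snd p) \<in> Wset (nat j)" unfolding Wset_def A_def by auto
    then show "cscale (Poly_Mapping.lookup (a (fst p)) (snd p)) (Ech (fst p) (snd p)) \<in> cs.span (Wset (nat j))"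
      by (intro cs.span_scale cs.span_base)
  qed
  then show "a \<in> cs.span (Wset (nat j))" using eq by simp
qed



lemma dim_gap:
  fixes Z B W :: "(nat set \<Rightarrow> 'k::field poly3) set"
  assumes B: "cs.subspace B" and BZ: "B \<subseteq> Z" and ZW: "Z \<subseteq> cs.span W" and W: "finite W"
    and z1: "z1 \<in> Z" and z2: "z2 \<in> Z" and n1: "z1 \<notin> B" and n2: "\<And>k. z2 - cscale k z1 \<notin> B"
  shows "cs.dim B + 2 \<le> cs.dim Z"
proof -
  obtain Bb where Bb: "Bb \<subseteq> B" "cs.independent Bb" "B \<subseteq> cs.span Bb" "card Bb = cs.dim B"
    by (rule cs.basis_exists)
  have spB: "cs.span Bb = B" by (rule cs.span_subspace[OF Bb(1) Bb(3) B])
  have "Bb \<subseteq> cs.span W" using Bb(1) BZ ZW by blast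
  then have fBb: "finite Bb" using cs.independent_span_bound[OF W Bb(2)] by blast
  have z1s: "z1 \<notin> cs.span Bb" using n1 spB by simp
  have i1: "cs.independent (insert z1 Bb)" by (rule cs.independent_insertI[OF z1s Bb(2)])
  have z2s: "z2 \<notin> cs.span (insert z1 Bb)"
    unfolding cs.span_breakdown_eq spB using n2 by blast
  have i2: "cs.independent (insert z2 (insert z1 Bb))" by (rule cs.independent_insertI[OF z2s i1])
  obtain Bz where Bz: "Bz \<subseteq> Z" "cs.independent Bz" "Z \<subseteq> cs.span Bz" "card Bz = cs.dim Z"
    by (rule cs.basis_exists)
  have "Bz \<subseteq> cs.span W" using Bz(1) ZW by blast
  then have fBz: "finite Bz" using cs.independent_span_bound[OF W Bz(2)] by blast
  have "insert z2 (insert z1 Bb) \<subseteq> cs.span Bz" using Bz(3) z1 z2 Bb(1) BZ by blast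
  then have "card (insert z2 (insert z1 Bb)) \<le> card Bz"
    using cs.independent_span_bound[OF fBz i2] by blast
  moreover have "z1 \<notin> Bb" using z1s cs.span_base by blast
  moreover have "z2 \<notin> insert z1 Bb" using z2s cs.span_base by blast
  ultimately show ?thesis using fBb Bb(4) Bz(4) by simp
qed

lemma minors:
  fixes c1 c2 d1 d2 e1 e2 :: "'k::field"
  assumes c: "c1 \<noteq> 0 \<or> c2 \<noteq> 0" and d: "d1 \<noteq> 0 \<or> d2 \<noteq> 0" and e: "e1 \<noteq> 0 \<or> e2 \<noteq> 0"
  shows "c1 * d2 \<noteq> 0 \<or> c2 * d2 \<noteq> 0 \<or> c2 * d1 \<noteq> 0 \<or> c1 * e1 \<noteq> 0 \<or> c1 * e2 \<noteq> 0"
  using c d e by auto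



lemma var3_cases: "var3 u = var3 0 \<or> var3 u = var3 1 \<or> var3 u = var3 2"
  by (simp add: var3_def)

lemma const3_uminus: "const3 (- a) = - const3 a"
  by (simp add: const3_def single_uminus)

lemma neq_by: "x \<in> B \<Longrightarrow> x \<notin> A \<Longrightarrow> A \<noteq> B" by blast

lemma sn1: "{1,2} \<noteq> {0,2::nat}" by (rule neq_by[of 0]; simp)
lemma sn2: "{1,2} \<noteq> {0,1::nat}" by (rule neq_by[of 0]; simp)
lemma sn3: "{0,2} \<noteq> {0,1::nat}" by (rule neq_by[of 1]; simp)
lemma sn4: "{0,2} \<noteq> {1,2::nat}" by (rule neq_by[of 1]; simp)
lemma sn5: "{0,1} \<noteq> {1,2::nat}" by (rule neq_by[of 2]; simp)
lemma sn6: "{0,1} \<noteq> {0,2::nat}" by (rule neq_by[of 2]; simp)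
lemma sn1': "{Suc 0,2} \<noteq> {0,2::nat}" by (rule neq_by[of 0]; simp)
lemma sn2': "{Suc 0,2} \<noteq> {0,Suc 0}" by (rule neq_by[of 0]; simp)
lemma sn3': "{0,2} \<noteq> {0,Suc 0}" by (rule neq_by[of 1]; simp)
lemma sn4': "{0,2} \<noteq> {Suc 0,2::nat}" by (rule neq_by[of 1]; simp)
lemma sn5': "{0,Suc 0} \<noteq> {Suc 0,2::nat}" by (rule neq_by[of 2]; simp)
lemma sn6': "{0,Suc 0} \<noteq> {0,2::nat}" by (rule neq_by[of 2]; simp)
lemmas set_neqs = sn1 sn2 sn3 sn4 sn5 sn6 sn1' sn2' sn3' sn4' sn5' sn6'

theorem lemmaA6:
  fixes I :: "'k::field poly3 set" and f l s :: "'k poly3" and n :: nat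
  assumes "homog_ideal I" and "m_primary I"
    and "minimal_generator I f" and "homog (int n) f"
    and "homog 1 l" and "socle_generator I s"
    and "f = l * s"
  shows "betti I 2 (int n + 1) \<ge> 2"
proof -
  note hf = assms(4) and hl = assms(5) and fls = assms(7)
  have I: "is_ideal I" using assms(1) unfolding homog_ideal_def by blast
  obtain G where G: "finite G" "\<forall>g\<in>G. is_homog g" "I = ideal_gen G" "\<forall>g\<in>G. g \<notin> ideal_gen (G - {g})" "f \<in> G"
    using assms(3) unfolding minimal_generator_def by blast
  define J where "J = ideal_gen (G - {f})"
  have J: "is_ideal J" unfolding J_def by (rule ideal_gen_ideal)
  have fJ: "f \<notin> J" using G unfolding J_def by blast
  have f0: "f \<noteq> 0" using fJ ideal_0[OF J] by auto
  have key: "\<And>u i. i \<in> I \<Longrightarrow> hpart n (var3 u * i) \<in> J"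
    unfolding J_def using graded_key[OF G(2) G(5) hf f0] G(3) by blast
  have fnot: "hpart n (l * s) \<notin> J" using fJ hpart_homog[OF hf] fls by simp
  obtain S where S: "\<forall>t\<in>S. is_homog t" "S \<subseteq> colon_m I" "s \<in> S"
    using assms(6) unfolding socle_generator_def by blast
  have xs: "var3 u * s \<in> I" for u
  proof -
    have "var3 u \<in> {var3 0, var3 1, var3 2}" using var3_cases[of u] by auto
    then have "var3 u \<in> max_ideal3" unfolding max_ideal3_def using ideal_gen_sup[of "{var3 0, var3 1, var3 2}"] by (rule subsetD[rotated])
    moreover have "s \<in> colon_m I" using S(2,3) by (rule subsetD)
    ultimately show ?thesis unfolding colon_m_def by blast
  qed
  obtain d where d: "homog d s" using S unfolding is_homog_def by blast
  have "homog (1 + d) f" using homog_mult[OF hl d] fls by simp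
  then have "1 + d = int n" using homog_deg_unique[OF f0 _ hf] by blast
  then have "d = int n + 1 - int 2" by simp
  then have hs: "homog (int n + 1 - int 2) s" using d by simp
  define nb where "nb \<gamma> \<longleftrightarrow> (\<exists>\<beta>. \<forall>w. const3 (\<gamma> w) * s - var3 w * \<beta> \<in> I)" for \<gamma> :: "nat \<Rightarrow> 'k"
  have core': False if nb1: "nb \<gamma>" and nb2: "nb \<gamma>'" and DD: "\<gamma>' u * \<gamma> w - \<gamma> u * \<gamma>' w \<noteq> 0" for \<gamma> \<gamma>' u w
  proof -
    obtain \<beta> where b: "\<And>w. const3 (\<gamma> w) * s - var3 w * \<beta> \<in> I" using nb1 unfolding nb_def by blast
    obtain \<beta>' where b': "\<And>w. const3 (\<gamma>' w) * s - var3 w * \<beta>' \<in> I" using nb2 unfolding nb_def by blast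
    show False by (rule core[OF J key fnot hl b b' DD])
  qed
  define g3 where "g3 p q r = (\<lambda>w::nat. if w = 0 then p else if w = 1 then q else r)" for p q r :: 'k
  define Bs where "Bs = kbounds I 2 (int n + 1)"
  define Zs where "Zs = kcycles I 2 (int n + 1)"
  have bnd: "nb (g3 p (- q) r)" if A: "a \<in> Bs" "a {1,2} = const3 p * s" "a {0,2} = const3 q * s" "a {0,1} = const3 r * s"
    for a p q r
  proof -
    obtain b where b: "\<And>T. a T - kdiff 2 b T \<in> I" using A(1) unfolding Bs_def kbounds_def by blast
    define \<beta> where "\<beta> = b {0,1,2}"
    have h0: "const3 p * s - var3 0 * \<beta> \<in> I" using b[of "{1,2}", unfolded kdiff2_12 A(2)] unfolding \<beta>_def .
    have "const3 q * s + var3 1 * \<beta> \<in> I" using b[of "{0,2}", unfolded kdiff2_02 A(3)] unfolding \<beta>_def by simp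
    then have "- (const3 q * s + var3 1 * \<beta>) \<in> I" by (rule ideal_uminus[OF I])
    moreover have "const3 (- q) * s - var3 1 * \<beta> = - (const3 q * s + var3 1 * \<beta>)"
      by (simp add: const3_uminus algebra_simps)
    ultimately have h1: "const3 (- q) * s - var3 1 * \<beta> \<in> I" by simp
    have h2: "const3 r * s - var3 2 * \<beta> \<in> I" using b[of "{0,1}", unfolded kdiff2_01 A(4)] unfolding \<beta>_def .
    have "const3 (g3 p (- q) r w) * s - var3 w * \<beta> \<in> I" for w
      using var3_cases[of w] h0 h1 h2 unfolding g3_def by (auto simp: var3_def)
    then show ?thesis unfolding nb_def by blast
  qed
  define zc where "zc T0 = (\<lambda>T. if T = T0 then s else 0)" for T0 :: "nat set"
  have zcyc: "zc T0 \<in> Zs" if "T0 \<subseteq> {0,1,2}" "card T0 = 2" for T0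
  proof -
    have "zc T0 \<in> kchains 2 (int n + 1)"
      unfolding kchains_def zc_def using that hs homog_zero by auto
    moreover have "kdiff 1 (zc T0) T \<in> I" for T
      by (rule kdiff_ideal[OF I]) (auto simp: zc_def xs ideal_0[OF I])
    ultimately show ?thesis unfolding Zs_def kcycles_def by simp
  qed
  define comb where "comb T1 T2 c1 c2 = cscale c1 (zc T1) + cscale c2 (zc T2)" for T1 T2 c1 c2
  have comb_app: "comb T1 T2 c1 c2 T = (if T = T1 then const3 c1 * s else 0) + (if T = T2 then const3 c2 * s else 0)"
    for T1 T2 c1 c2 T
    by (simp add: comb_def cscale_def zc_def)
  have "\<exists>T1 T2. T1 \<subseteq> {0,1,2} \<and> card T1 = 2 \<and> T2 \<subseteq> {0,1,2} \<and> card T2 = 2 \<and>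
      (\<forall>c1 c2. comb T1 T2 c1 c2 \<in> Bs \<longrightarrow> c1 = 0 \<and> c2 = 0)"
  proof (rule ccontr)
    assume "\<not> ?thesis"
    then have all: "\<exists>c1 c2. comb T1 T2 c1 c2 \<in> Bs \<and> (c1 \<noteq> 0 \<or> c2 \<noteq> 0)"
      if "T1 \<subseteq> {0,1,2}" "card T1 = 2" "T2 \<subseteq> {0,1,2}" "card T2 = 2" for T1 T2
      using that by blast
    obtain c1 c2 where c: "comb {1,2} {0,2} c1 c2 \<in> Bs" "c1 \<noteq> 0 \<or> c2 \<noteq> 0" using all[of "{1,2}" "{0,2}"] by auto
    obtain d1 d2 where dd: "comb {1,2} {0,1} d1 d2 \<in> Bs" "d1 \<noteq> 0 \<or> d2 \<noteq> 0" using all[of "{1,2}" "{0,1}"] by auto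
    obtain e1 e2 where e: "comb {0,2} {0,1} e1 e2 \<in> Bs" "e1 \<noteq> 0 \<or> e2 \<noteq> 0" using all[of "{0,2}" "{0,1}"] by auto
    have n1: "nb (g3 c1 (- c2) 0)"
      by (rule bnd[OF c(1)]) (simp_all add: comb_app set_neqs)
    have n2: "nb (g3 d1 (- 0) d2)"
      by (rule bnd[OF dd(1)]) (simp_all add: comb_app set_neqs)
    have n3: "nb (g3 0 (- e1) e2)"
      by (rule bnd[OF e(1)]) (simp_all add: comb_app set_neqs)
    have "c1 * d2 \<noteq> 0 \<or> c2 * d2 \<noteq> 0 \<or> c2 * d1 \<noteq> 0 \<or> c1 * e1 \<noteq> 0 \<or> c1 * e2 \<noteq> 0"
      by (rule minors[OF c(2) dd(2) e(2)])
    then show False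
    proof (elim disjE)
      assume "c1 * d2 \<noteq> 0" then show False using core'[OF n1 n2, of 0 2] by (simp add: g3_def)
    next
      assume "c2 * d2 \<noteq> 0" then show False using core'[OF n1 n2, of 1 2] by (simp add: g3_def)
    next
      assume "c2 * d1 \<noteq> 0" then show False using core'[OF n1 n2, of 0 1] by (simp add: g3_def)
    next
      assume "c1 * e1 \<noteq> 0" then show False using core'[OF n1 n3, of 0 1] by (simp add: g3_def)
    next
      assume "c1 * e2 \<noteq> 0" then show False using core'[OF n1 n3, of 0 2] by (simp add: g3_def)
    qed
  qed
  then obtain T1 T2 where T: "T1 \<subseteq> {0,1,2}" "card T1 = 2" "T2 \<subseteq> {0,1,2}" "card T2 = 2"
    and P: "\<And>c1 c2. comb T1 T2 c1 c2 \<in> Bs \<Longrightarrow> c1 = 0 \<and> c2 = 0" by blast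
  have z1B: "zc T1 \<notin> Bs"
  proof
    assume "zc T1 \<in> Bs"
    moreover have "comb T1 T2 1 0 = zc T1" by (simp add: comb_def cscale_def fun_eq_iff)
    ultimately show False using P[of 1 0] by simp
  qed
  have z2B: "zc T2 - cscale k (zc T1) \<notin> Bs" for k
  proof
    assume "zc T2 - cscale k (zc T1) \<in> Bs"
    moreover have "comb T1 T2 (- k) 1 = zc T2 - cscale k (zc T1)"
      by (simp add: comb_def cscale_def fun_eq_iff const3_uminus)
    ultimately show False using P[of "- k" 1] by simp
  qed
  have "cs.dim Bs + 2 \<le> cs.dim Zs"
  proof (rule dim_gap[OF _ _ _ finite_Wset zcyc[OF T(1,2)] zcyc[OF T(3,4)] z1B z2B])
    show "cs.subspace Bs" unfolding Bs_def by (rule kbounds_subspace[OF I])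
    show "Bs \<subseteq> Zs" unfolding Bs_def Zs_def by (rule kb_sub_kc[OF I])
    show "Zs \<subseteq> cs.span (Wset (nat (int n + 1)))"
      using kchains_span[of 2 "int n + 1"] unfolding Zs_def kcycles_def by blast
  qed
  then show ?thesis unfolding betti_def Bs_def Zs_def by simp
qed


end
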